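(* Let $n\ge1$ and let $k$ be an integer with $1\le k\le \frac n4+1$. Let $f:\mathbb{R}^n\to\mathbb{R}$ be radial, $f(x)=f_1(\|x\|_2)$, where $f_1$ is $2k$ times continuously differentiable on $(0,\infty)$. Then there are real numbers $c_{i,j}$ (depending on $n$ and $k$), indexed by integers $0\le i\le 2k$, $0\le j\le 2k-1$ with $i+j\le 2k$, satisfying $\sum_{i,j}|c_{i,j}|\le 5^k$, such that for all $x\ne0$, with $r=\|x\|_2$, $$((I-\Delta)^kf)(x)=\sum_{\substack{0\le i\le 2k,\ 0\le j\le 2k-1\\ i+j\le 2k}}\frac{c_{i,j}\,n^j f_1^{(i)}(r)}{r^j}.$$
   Context: $\Delta=\sum_{i=1}^n\partial^2/\partial x_i^2$ is the Laplacian and $(I-\Delta)h=h-\Delta h$; $(I-\Delta)^k$ is its $k$-fold iterate. $f_1^{(i)}$ denotes the $i$-th derivative of $f_1$. *)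

theory Defs
  imports "HOL-Analysis.Analysis"
begin

definition partial_deriv :: "'n::finite \<Rightarrow> (real^'n \<Rightarrow> real) \<Rightarrow> real^'n \<Rightarrow> real" where
  "partial_deriv i g x = deriv (\<lambda>t. g (x + t *\<^sub>R axis i 1)) 0"

definition laplacian :: "(real^'n::finite \<Rightarrow> real) \<Rightarrow> real^'n \<Rightarrow> real" where
  "laplacian g x = (\<Sum>i\<in>UNIV. partial_deriv i (partial_deriv i g) x)"

definition id_minus_laplacian :: "(real^'n::finite \<Rightarrow> real) \<Rightarrow> real^'n \<Rightarrow> real" where
  "id_minus_laplacian g x = g x - laplacian g x"

definition higher_deriv :: "nat \<Rightarrow> (real \<Rightarrow> real) \<Rightarrow> real \<Rightarrow> real" where
  "higher_deriv i f = (deriv ^^ i) f"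

end

theory Submission
  imports Defs
begin


lemma norm_line:
  fixes y :: "real^'n::finite"
  shows "norm (y + t *\<^sub>R axis i 1) = sqrt ((norm y)^2 + 2*t*(y$i) + t^2)"
proof -
  have "(y + t *\<^sub>R axis i 1) \<bullet> (y + t *\<^sub>R axis i 1) = y \<bullet> y + 2*t*(y$i) + t^2"
    by (simp add: inner_add_left inner_add_right inner_axis inner_axis' power2_eq_square algebra_simps)
  then show ?thesis by (simp add: norm_eq_sqrt_inner power2_norm_eq_inner)
qed

lemma norm_line_deriv:
  fixes y :: "real^'n::finite"
  assumes "y \<noteq> 0"
  shows "((\<lambda>t. norm (y + t *\<^sub>R axis i 1)) has_real_derivative (y$i / norm y)) (at 0)"
proof -
  have p: "(norm y)^2 + 2*0*(y$i) + 0^2 > 0" using assms by simp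
  have "((\<lambda>t. sqrt ((norm y)^2 + 2*t*(y$i) + t^2)) has_real_derivative
     (inverse (sqrt ((norm y)^2 + 2*0*(y$i) + 0^2)) / 2 * (2*(y$i) + 2*0))) (at 0)"
    by (rule DERIV_real_sqrt[THEN DERIV_chain2]) (use p in \<open>auto intro!: derivative_eq_intros\<close>)
  moreover have "inverse (sqrt ((norm y)^2 + 2*0*(y$i) + 0^2)) / 2 * (2*(y$i) + 2*0) = y$i / norm y"
    by (simp add: field_simps)
  ultimately show ?thesis by (simp add: norm_line)
qed

lemma ev_nonzero:
  fixes y :: "real^'n::finite"
  assumes "y \<noteq> 0"
  shows "\<forall>\<^sub>F t in nhds 0. y + t *\<^sub>R axis i 1 \<noteq> 0"
proof -
  have "\<forall>\<^sub>F t in nhds 0. dist t (0::real) < norm y" using assms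
    by (intro eventually_nhds_metric[THEN iffD2]) (auto intro!: exI[of _ "norm y"])
  then show ?thesis
  proof (rule eventually_mono)
    fix t :: real assume "dist t 0 < norm y"
    then have "norm (t *\<^sub>R axis i (1::real)) < norm y" by simp
    then show "y + t *\<^sub>R axis i 1 \<noteq> 0"
      by (metis add.commute add_diff_cancel_right' diff_0 norm_minus_cancel order.irrefl)
  qed
qed

lemma partial_radial:
  fixes g :: "real^'n::finite \<Rightarrow> real"
  assumes g: "\<forall>y. y \<noteq> 0 \<longrightarrow> g y = \<phi> (norm y)"
    and d: "\<forall>r>0. (\<phi> has_real_derivative \<phi>1 r) (at r)"
    and y: "y \<noteq> 0"
  shows "partial_deriv i g y = \<phi>1 (norm y) * (y$i) / norm y"
proof -
  have ev: "\<forall>\<^sub>F t in nhds 0. g (y + t *\<^sub>R axis i 1) = \<phi> (norm (y + t *\<^sub>R axis i 1))"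
    using ev_nonzero[OF y, of i] by (rule eventually_mono) (simp add: g)
  have "((\<lambda>t. \<phi> (norm (y + t *\<^sub>R axis i 1))) has_real_derivative \<phi>1 (norm y) * (y$i / norm y)) (at 0)"
    using d y norm_line_deriv[OF y, of i]
    by (intro DERIV_chain2[where f=\<phi>]) auto
  then have "((\<lambda>t. g (y + t *\<^sub>R axis i 1)) has_real_derivative \<phi>1 (norm y) * (y$i / norm y)) (at 0)"
    by (subst DERIV_cong_ev[OF refl ev refl])
  then show ?thesis unfolding partial_deriv_def by (simp add: DERIV_imp_deriv)
qed

lemma second_partial_radial:
  fixes g :: "real^'n::finite \<Rightarrow> real"
  assumes g: "\<forall>y. y \<noteq> 0 \<longrightarrow> g y = \<phi> (norm y)"
    and d: "\<forall>r>0. (\<phi> has_real_derivative \<phi>1 r) (at r)"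
    and d2: "\<forall>r>0. (\<phi>1 has_real_derivative \<phi>2 r) (at r)"
    and x: "x \<noteq> 0"
  shows "partial_deriv i (partial_deriv i g) x =
     \<phi>2 (norm x) * (x$i)^2 / (norm x)^2 + \<phi>1 (norm x) * (1 / norm x - (x$i)^2 / (norm x)^3)"
proof -
  let ?z = "\<lambda>t. x + t *\<^sub>R axis i (1::real)"
  have ev: "\<forall>\<^sub>F t in nhds 0. partial_deriv i g (?z t) =
      \<phi>1 (norm (?z t)) * ((x$i) + t) / norm (?z t)"
    using ev_nonzero[OF x, of i] by (rule eventually_mono) (simp add: partial_radial[OF g d])
  have nx: "norm x > 0" using x by simp
  have n0: "((\<lambda>t. norm (?z t)) has_real_derivative (x$i / norm x)) (at 0)"
    using norm_line_deriv[OF x] .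
  have p1: "((\<lambda>t. \<phi>1 (norm (?z t))) has_real_derivative \<phi>2 (norm x) * (x$i / norm x)) (at 0)"
    using d2 nx n0 by (intro DERIV_chain2[where f=\<phi>1]) auto
  have "((\<lambda>t. \<phi>1 (norm (?z t)) * ((x$i) + t) / norm (?z t)) has_real_derivative
     \<phi>2 (norm x) * (x$i)^2 / (norm x)^2 + \<phi>1 (norm x) * (1 / norm x - (x$i)^2 / (norm x)^3)) (at 0)"
    by (rule DERIV_cong[OF DERIV_divide[OF DERIV_mult[OF p1 DERIV_add[OF DERIV_const DERIV_ident]] n0]])
       (use nx in \<open>simp_all add: field_simps power2_eq_square power3_eq_cube\<close>)
  then have "((\<lambda>t. partial_deriv i g (?z t)) has_real_derivative
     \<phi>2 (norm x) * (x$i)^2 / (norm x)^2 + \<phi>1 (norm x) * (1 / norm x - (x$i)^2 / (norm x)^3)) (at 0)"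
    by (subst DERIV_cong_ev[OF refl ev refl]) simp
  then show ?thesis unfolding partial_deriv_def[of i "partial_deriv i g"] by (simp add: DERIV_imp_deriv)
qed

lemma sum_sq_norm:
  fixes x :: "real^'n::finite"
  shows "(\<Sum>i\<in>UNIV. (x$i)^2) = (norm x)^2"
  unfolding power2_norm_eq_inner inner_vec_def by (simp add: power2_eq_square)

lemma laplacian_radial:
  fixes g :: "real^'n::finite \<Rightarrow> real"
  assumes g: "\<forall>y. y \<noteq> 0 \<longrightarrow> g y = \<phi> (norm y)"
    and d: "\<forall>r>0. (\<phi> has_real_derivative \<phi>1 r) (at r)"
    and d2: "\<forall>r>0. (\<phi>1 has_real_derivative \<phi>2 r) (at r)"
    and x: "x \<noteq> 0"
  shows "laplacian g x = \<phi>2 (norm x) + (real CARD('n) - 1) / norm x * \<phi>1 (norm x)"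
proof -
  have nx: "norm x > 0" using x by simp
  have "laplacian g x = (\<Sum>i\<in>UNIV. \<phi>2 (norm x) / (norm x)^2 * (x$i)^2 +
      (\<phi>1 (norm x) / norm x - \<phi>1 (norm x) / (norm x)^3 * (x$i)^2))"
    unfolding laplacian_def
    by (rule sum.cong[OF refl], subst second_partial_radial[OF g d d2 x]) (simp add: algebra_simps)
  also have "\<dots> = \<phi>2 (norm x) / (norm x)^2 * (norm x)^2 + (real CARD('n) * (\<phi>1 (norm x) / norm x)
      - \<phi>1 (norm x) / (norm x)^3 * (norm x)^2)"
    by (simp add: sum.distrib sum_subtractf sum_distrib_left sum_sq_norm[symmetric])
  also have "\<dots> = \<phi>2 (norm x) + (real CARD('n) - 1) / norm x * \<phi>1 (norm x)"
    using nx by (simp add: field_simps power2_eq_square power3_eq_cube)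
  finally show ?thesis .
qed



definition SS :: "nat \<Rightarrow> (nat \<times> nat) set" where
  "SS k = {(i,j). i \<le> 2*k \<and> j \<le> 2*k - 1 \<and> i + j \<le> 2*k}"

lemma finite_SS: "finite (SS k)"
  by (rule finite_subset[of _ "{..2*k} \<times> {..2*k}"]) (auto simp: SS_def)

definition MM :: "real \<Rightarrow> nat \<Rightarrow> nat \<Rightarrow> nat \<Rightarrow> nat \<Rightarrow> real" where
  "MM N i j i' j' = (if i' = i \<and> j' = j then 1 else 0) + (if i' = i+2 \<and> j' = j then -1 else 0)
     + (if i' = i+1 \<and> j' = j+1 then 2 * real j - N + 1 else 0)
     + (if i' = i \<and> j' = j+2 then real j * (N - 2 - real j) else 0)"

primrec coef :: "real \<Rightarrow> nat \<Rightarrow> nat \<Rightarrow> nat \<Rightarrow> nat \<Rightarrow> real" where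
  "coef N k 0 = (\<lambda>i j. if i = 0 \<and> j = 0 then 1 else 0)"
| "coef N k (Suc m) = (\<lambda>i' j'. \<Sum>(i,j)\<in>SS k. coef N k m i j * MM N i j i' j')"

definition EE :: "(nat \<Rightarrow> nat \<Rightarrow> real) \<Rightarrow> nat \<Rightarrow> (nat \<Rightarrow> real \<Rightarrow> real) \<Rightarrow> real \<Rightarrow> real" where
  "EE a k F r = (\<Sum>(i,j)\<in>SS k. a i j * (F i r / r^j))"

lemma delta_pair:
  assumes "finite S"
  shows "(\<Sum>(i',j')\<in>S. (if i' = a \<and> j' = b then (v::real) else 0) * G i' j') = (if (a,b) \<in> S then v * G a b else 0)"
proof -
  have "(\<Sum>(i',j')\<in>S. (if i' = a \<and> j' = b then v else 0) * G i' j') =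
        (\<Sum>p\<in>S. if p = (a,b) then v * G a b else 0)"
  proof (rule sum.cong[OF refl])
    fix p assume "p \<in> S" then show "(case p of (i', j') \<Rightarrow> (if i' = a \<and> j' = b then v else 0) * G i' j') =
       (if p = (a,b) then v * G a b else 0)" by (cases p) auto
  qed
  also have "\<dots> = (if (a,b) \<in> S then v * G a b else 0)" using assms by simp
  finally show ?thesis .
qed

lemma MM_nonzero:
  "MM N i j i' j' \<noteq> 0 \<Longrightarrow> (i' = i \<and> j' = j) \<or> (i' = i+2 \<and> j' = j) \<or> (i' = i+1 \<and> j' = j+1)
     \<or> (i' = i \<and> j' = j+2 \<and> j \<noteq> 0)"
  by (auto simp: MM_def split: if_splits)

lemma coef_support:
  "m \<le> k \<Longrightarrow> coef N k m i j \<noteq> 0 \<Longrightarrow> i + j \<le> 2*m \<and> j \<le> 2*m - 1"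
proof (induction m arbitrary: i j)
  case 0
  then show ?case by (simp split: if_splits)
next
  case (Suc m)
  have "\<exists>p\<in>SS k. (case p of (i0,j0) \<Rightarrow> coef N k m i0 j0 * MM N i0 j0 i j) \<noteq> 0"
  proof (rule ccontr)
    assume "\<not> ?thesis"
    then have "\<forall>p\<in>SS k. (case p of (i0,j0) \<Rightarrow> coef N k m i0 j0 * MM N i0 j0 i j) = 0" by blast
    then have "coef N k (Suc m) i j = 0" by (simp add: sum.neutral)
    with Suc.prems(2) show False by simp
  qed
  then obtain p where p: "p \<in> SS k" "(case p of (i0,j0) \<Rightarrow> coef N k m i0 j0 * MM N i0 j0 i j) \<noteq> 0"
    by blast
  obtain i0 j0 where pe: "p = (i0,j0)" by (cases p)
  with p have c: "coef N k m i0 j0 \<noteq> 0" and mm: "MM N i0 j0 i j \<noteq> 0" by auto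
  from Suc.IH[OF _ c] Suc.prems(1) have "i0 + j0 \<le> 2*m \<and> j0 \<le> 2*m - 1" by simp
  then have h1: "i0 + j0 \<le> 2*m" and h2: "j0 \<le> 2*m" and h3: "j0 \<noteq> 0 \<Longrightarrow> j0 + 1 \<le> 2*m"
    by auto
  have e: "2 * Suc m - 1 = 2*m + 1" by simp
  from MM_nonzero[OF mm] show ?case unfolding e
  proof (elim disjE conjE)
    assume "i = i0" "j = j0 + 2" "j0 \<noteq> 0"
    then show "i + j \<le> 2 * Suc m \<and> j \<le> 2*m + 1" using h1 h3 by simp
  qed (use h1 h2 in simp_all)
qed

definition D1 :: "(nat \<Rightarrow> real \<Rightarrow> real) \<Rightarrow> nat \<Rightarrow> nat \<Rightarrow> real \<Rightarrow> real" where
  "D1 F i j r = F (Suc i) r / r^j - real j * (F i r / r^(Suc j))"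

definition D2 :: "(nat \<Rightarrow> real \<Rightarrow> real) \<Rightarrow> nat \<Rightarrow> nat \<Rightarrow> real \<Rightarrow> real" where
  "D2 F i j r = D1 F (Suc i) j r - real j * D1 F i (Suc j) r"

lemma term_d1:
  assumes F: "\<forall>i<K. \<forall>r>0. (F i has_real_derivative F (Suc i) r) (at r)" and i: "i < K" and r: "r > 0"
  shows "((\<lambda>r. F i r / r^j) has_real_derivative D1 F i j r) (at r)"
proof (rule DERIV_cong[OF DERIV_divide[OF _ DERIV_pow]])
  show "(F i has_real_derivative F (Suc i) r) (at r)" using F i r by blast
  show "r^j \<noteq> 0" using r by simp
  show "(F (Suc i) r * r ^ j - F i r * (real j * r ^ (j - Suc 0))) / (r ^ j * r ^ j) = D1 F i j r"
    unfolding D1_def using r by (cases j) (simp_all add: field_simps)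
qed

lemma term_d2:
  assumes F: "\<forall>i<K. \<forall>r>0. (F i has_real_derivative F (Suc i) r) (at r)" and i: "Suc i < K" and r: "r > 0"
  shows "(D1 F i j has_real_derivative D2 F i j r) (at r)"
proof -
  have "((\<lambda>r. F (Suc i) r / r^j - real j * (F i r / r^(Suc j))) has_real_derivative
     D1 F (Suc i) j r - real j * D1 F i (Suc j) r) (at r)"
    using i r by (intro DERIV_diff DERIV_cmult term_d1[OF F]) auto
  then show ?thesis unfolding D2_def by (simp add: D1_def[abs_def])
qed

lemma lop_term:
  assumes r: "r > 0"
  shows "F i r / r^j - D2 F i j r - (N - 1) / r * D1 F i j r =
    F i r / r^j - F (i+2) r / r^j + (2 * real j - N + 1) * (F (i+1) r / r^(j+1))
      + real j * (N - 2 - real j) * (F i r / r^(j+2))"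
  using r by (simp add: D2_def D1_def field_simps)

lemma inner_delta:
  assumes "i + j + 2 \<le> 2*k" "j + 2 \<le> 2*k" "j \<noteq> 0 \<Longrightarrow> j + 3 \<le> 2*k"
  shows "(\<Sum>(i',j')\<in>SS k. MM N i j i' j' * (F i' r / r^j')) =
    F i r / r^j - F (i+2) r / r^j + (2 * real j - N + 1) * (F (i+1) r / r^(j+1))
      + real j * (N - 2 - real j) * (F i r / r^(j+2))"
proof -
  let ?G = "\<lambda>i' j'. F i' r / r^j'"
  have "(\<Sum>(i',j')\<in>SS k. MM N i j i' j' * ?G i' j') =
     (\<Sum>(i',j')\<in>SS k. (if i' = i \<and> j' = j then 1 else 0) * ?G i' j') +
     (\<Sum>(i',j')\<in>SS k. (if i' = i+2 \<and> j' = j then -1 else 0) * ?G i' j') +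
     (\<Sum>(i',j')\<in>SS k. (if i' = i+1 \<and> j' = j+1 then 2 * real j - N + 1 else 0) * ?G i' j') +
     (\<Sum>(i',j')\<in>SS k. (if i' = i \<and> j' = j+2 then real j * (N - 2 - real j) else 0) * ?G i' j')"
    unfolding sum.distrib[symmetric] by (intro sum.cong refl) (auto simp: MM_def distrib_right)
  also have "\<dots> = F i r / r^j - F (i+2) r / r^j + (2 * real j - N + 1) * (F (i+1) r / r^(j+1))
      + real j * (N - 2 - real j) * (F i r / r^(j+2))"
    using assms by (simp only: delta_pair[OF finite_SS]) (auto simp: SS_def)
  finally show ?thesis .
qed

lemma EE_step:
  assumes sup: "\<And>i j. a i j \<noteq> 0 \<Longrightarrow> i + j \<le> 2*m \<and> j \<le> 2*m - 1" and mk: "m < k" and r: "r > 0"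
  shows "EE a k F r - (\<Sum>(i,j)\<in>SS k. a i j * D2 F i j r) - (N - 1) / r * (\<Sum>(i,j)\<in>SS k. a i j * D1 F i j r)
     = EE (\<lambda>i' j'. \<Sum>(i,j)\<in>SS k. a i j * MM N i j i' j') k F r"
proof -
  have "EE (\<lambda>i' j'. \<Sum>(i,j)\<in>SS k. a i j * MM N i j i' j') k F r =
     (\<Sum>(i',j')\<in>SS k. \<Sum>(i,j)\<in>SS k. a i j * MM N i j i' j' * (F i' r / r^j'))"
    unfolding EE_def by (simp only: sum_distrib_right case_prod_unfold)
  also have "\<dots> = (\<Sum>(i,j)\<in>SS k. \<Sum>(i',j')\<in>SS k. a i j * MM N i j i' j' * (F i' r / r^j'))"
    unfolding case_prod_unfold by (rule sum.swap)
  also have "\<dots> = (\<Sum>(i,j)\<in>SS k. a i j * (F i r / r^j - D2 F i j r - (N - 1) / r * D1 F i j r))"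
  proof (rule sum.cong[OF refl])
    fix p assume "p \<in> SS k"
    obtain i j where p: "p = (i,j)" by (cases p)
    show "(case p of (i,j) \<Rightarrow> \<Sum>(i',j')\<in>SS k. a i j * MM N i j i' j' * (F i' r / r^j')) =
      (case p of (i,j) \<Rightarrow> a i j * (F i r / r^j - D2 F i j r - (N - 1) / r * D1 F i j r))"
    proof (cases "a i j = 0")
      case True then show ?thesis by (simp add: p)
    next
      case False
      from sup[OF False] mk have b: "i + j + 2 \<le> 2*k" "j + 2 \<le> 2*k" "j \<noteq> 0 \<Longrightarrow> j + 3 \<le> 2*k"
        by auto
      have "(\<Sum>(i',j')\<in>SS k. a i j * MM N i j i' j' * (F i' r / r^j')) =
         a i j * (\<Sum>(i',j')\<in>SS k. MM N i j i' j' * (F i' r / r^j'))"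
        by (simp add: sum_distrib_left case_prod_unfold mult.assoc)
      also have "\<dots> = a i j * (F i r / r^j - D2 F i j r - (N - 1) / r * D1 F i j r)"
        using inner_delta[OF b, of N F r] lop_term[OF r, of F i j N] by simp
      finally show ?thesis by (simp add: p)
    qed
  qed
  also have "\<dots> = EE a k F r - (\<Sum>(i,j)\<in>SS k. a i j * D2 F i j r) - (N - 1) / r * (\<Sum>(i,j)\<in>SS k. a i j * D1 F i j r)"
    unfolding EE_def by (simp add: sum_subtractf sum_distrib_left right_diff_distrib case_prod_unfold algebra_simps sum.distrib)
  finally show ?thesis by simp
qed

lemma abs_if0: "\<bar>if P then (v::real) else 0\<bar> = (if P then \<bar>v\<bar> else 0)" by simp

lemma mm_bound:
  assumes N1: "N \<ge> 1" and jc: "j = 0 \<or> 2 * real j + 2 \<le> N"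
  shows "(\<Sum>(i',j')\<in>SS k. \<bar>MM N i j i' j'\<bar> / N^j') \<le> 4 / N^j"
proof -
  let ?G = "\<lambda>i' j'::nat. 1 / N^j'"
  have Npos: "N > 0" using N1 by simp
  have "(\<Sum>(i',j')\<in>SS k. \<bar>MM N i j i' j'\<bar> / N^j') \<le>
     (\<Sum>(i',j')\<in>SS k. (if i' = i \<and> j' = j then \<bar>1\<bar> else 0) * ?G i' j' +
        (if i' = i+2 \<and> j' = j then \<bar>-1\<bar> else 0) * ?G i' j' +
        (if i' = i+1 \<and> j' = j+1 then \<bar>2 * real j - N + 1\<bar> else 0) * ?G i' j' +
        (if i' = i \<and> j' = j+2 then \<bar>real j * (N - 2 - real j)\<bar> else 0) * ?G i' j')"
  proof (rule sum_mono)
    fix p assume "p \<in> SS k"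
    obtain i' j' where p: "p = (i',j')" by (cases p)
    have "\<bar>MM N i j i' j'\<bar> \<le> (if i' = i \<and> j' = j then \<bar>1\<bar> else 0) +
        (if i' = i+2 \<and> j' = j then \<bar>-1\<bar> else 0) +
        (if i' = i+1 \<and> j' = j+1 then \<bar>2 * real j - N + 1\<bar> else 0) +
        (if i' = i \<and> j' = j+2 then \<bar>real j * (N - 2 - real j)\<bar> else 0)"
      unfolding MM_def abs_if0[symmetric] by (intro abs_triangle_ineq[THEN order_trans] add_mono order_refl)
    then have "\<bar>MM N i j i' j'\<bar> / N^j' \<le> ((if i' = i \<and> j' = j then \<bar>1\<bar> else 0) +
        (if i' = i+2 \<and> j' = j then \<bar>-1\<bar> else 0) +
        (if i' = i+1 \<and> j' = j+1 then \<bar>2 * real j - N + 1\<bar> else 0) +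
        (if i' = i \<and> j' = j+2 then \<bar>real j * (N - 2 - real j)\<bar> else 0)) / N^j'"
      by (rule divide_right_mono) (use Npos in simp)
    then show "(case p of (i',j') \<Rightarrow> \<bar>MM N i j i' j'\<bar> / N^j') \<le> (case p of (i',j') \<Rightarrow>
        (if i' = i \<and> j' = j then \<bar>1\<bar> else 0) * ?G i' j' +
        (if i' = i+2 \<and> j' = j then \<bar>-1\<bar> else 0) * ?G i' j' +
        (if i' = i+1 \<and> j' = j+1 then \<bar>2 * real j - N + 1\<bar> else 0) * ?G i' j' +
        (if i' = i \<and> j' = j+2 then \<bar>real j * (N - 2 - real j)\<bar> else 0) * ?G i' j')"
      by (simp add: p add_divide_distrib)
  qed
  also have "\<dots> = (if (i,j) \<in> SS k then \<bar>1\<bar> * ?G i j else 0) + (if (i+2,j) \<in> SS k then \<bar>-1\<bar> * ?G (i+2) j else 0)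
      + (if (i+1,j+1) \<in> SS k then \<bar>2 * real j - N + 1\<bar> * ?G (i+1) (j+1) else 0)
      + (if (i,j+2) \<in> SS k then \<bar>real j * (N - 2 - real j)\<bar> * ?G i (j+2) else 0)"
  proof -
    have "\<And>A B C D. (\<Sum>(i',j')\<in>SS k. A i' j' * ?G i' j' + B i' j' * ?G i' j' + C i' j' * ?G i' j' + D i' j' * ?G i' j')
      = (\<Sum>(i',j')\<in>SS k. A i' j' * ?G i' j') + (\<Sum>(i',j')\<in>SS k. B i' j' * ?G i' j')
        + (\<Sum>(i',j')\<in>SS k. C i' j' * ?G i' j') + (\<Sum>(i',j')\<in>SS k. D i' j' * ?G i' j')"
      unfolding sum.distrib[symmetric] by (intro sum.cong refl) auto
    then show ?thesis by (simp only: delta_pair[OF finite_SS])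
  qed
  also have "\<dots> \<le> \<bar>1\<bar> * ?G i j + \<bar>-1\<bar> * ?G (i+2) j + \<bar>2 * real j - N + 1\<bar> * ?G (i+1) (j+1)
      + \<bar>real j * (N - 2 - real j)\<bar> * ?G i (j+2)"
    using Npos by (intro add_mono) auto
  also have "\<dots> \<le> 1 / N^j + 1 / N^j + 1 / N^j + 1 / N^j"
  proof (intro add_mono)
    have a1: "\<bar>2 * real j - N + 1\<bar> \<le> N" using jc N1 by auto
    have a2: "\<bar>real j * (N - 2 - real j)\<bar> \<le> N * N"
    proof (cases "j = 0")
      case False
      then have h: "2 * real j + 2 \<le> N" using jc by simp
      have "0 \<le> real j * (N - 2 - real j)" using h by simp
      moreover have "real j * (N - 2 - real j) \<le> N * N"
        by (rule mult_mono) (use h in auto)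
      ultimately show ?thesis by simp
    qed (use N1 in simp)
    show "\<bar>2 * real j - N + 1\<bar> * ?G (i+1) (j+1) \<le> 1 / N^j"
      using mult_right_mono[OF a1, of "1 / N^(j+1)"] Npos by simp
    show "\<bar>real j * (N - 2 - real j)\<bar> * ?G i (j+2) \<le> 1 / N^j"
      using mult_right_mono[OF a2, of "1 / N^(j+2)"] Npos by (simp add: power2_eq_square)
  qed auto
  finally show ?thesis by simp
qed

lemma coef_bound:
  assumes N1: "N \<ge> 1" and kN: "real k \<le> N / 4 + 1"
  shows "m \<le> k \<Longrightarrow> (\<Sum>(i,j)\<in>SS k. \<bar>coef N k m i j\<bar> / N^j) \<le> 4^m"
proof (induction m)
  case 0
  have "(\<Sum>(i,j)\<in>SS k. \<bar>coef N k 0 i j\<bar> / N^j) = (\<Sum>(i,j)\<in>SS k. (if i = 0 \<and> j = 0 then 1 else 0) * (1 / N^j))"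
    by (intro sum.cong refl) auto
  also have "\<dots> = 1" by (simp only: delta_pair[OF finite_SS]) (simp add: SS_def)
  finally show ?case by simp
next
  case (Suc m)
  have Npos: "N > 0" using N1 by simp
  let ?a = "coef N k m"
  have "(\<Sum>(i',j')\<in>SS k. \<bar>coef N k (Suc m) i' j'\<bar> / N^j') \<le>
     (\<Sum>(i',j')\<in>SS k. \<Sum>(i,j)\<in>SS k. \<bar>?a i j\<bar> * (\<bar>MM N i j i' j'\<bar> / N^j'))"
  proof (rule sum_mono)
    fix p assume "p \<in> SS k"
    obtain i' j' where p: "p = (i',j')" by (cases p)
    have "\<bar>coef N k (Suc m) i' j'\<bar> \<le> (\<Sum>(i,j)\<in>SS k. \<bar>?a i j * MM N i j i' j'\<bar>)"
      unfolding coef.simps case_prod_unfold by (rule sum_abs)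
    then have "\<bar>coef N k (Suc m) i' j'\<bar> / N^j' \<le> (\<Sum>(i,j)\<in>SS k. \<bar>?a i j * MM N i j i' j'\<bar>) / N^j'"
      by (rule divide_right_mono) (use Npos in simp)
    also have "\<dots> = (\<Sum>(i,j)\<in>SS k. \<bar>?a i j\<bar> * (\<bar>MM N i j i' j'\<bar> / N^j'))"
      by (simp add: sum_divide_distrib case_prod_unfold abs_mult)
    finally show "(case p of (i',j') \<Rightarrow> \<bar>coef N k (Suc m) i' j'\<bar> / N^j') \<le>
       (case p of (i',j') \<Rightarrow> \<Sum>(i,j)\<in>SS k. \<bar>?a i j\<bar> * (\<bar>MM N i j i' j'\<bar> / N^j'))"
      by (simp add: p)
  qed
  also have "\<dots> = (\<Sum>(i,j)\<in>SS k. \<Sum>(i',j')\<in>SS k. \<bar>?a i j\<bar> * (\<bar>MM N i j i' j'\<bar> / N^j'))"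
    unfolding case_prod_unfold by (rule sum.swap)
  also have "\<dots> \<le> (\<Sum>(i,j)\<in>SS k. \<bar>?a i j\<bar> * (4 / N^j))"
  proof (rule sum_mono)
    fix p assume "p \<in> SS k"
    obtain i j where p: "p = (i,j)" by (cases p)
    have "(\<Sum>(i',j')\<in>SS k. \<bar>?a i j\<bar> * (\<bar>MM N i j i' j'\<bar> / N^j')) \<le> \<bar>?a i j\<bar> * (4 / N^j)"
    proof (cases "?a i j = 0")
      case True then show ?thesis by simp
    next
      case False
      from coef_support[OF _ False] Suc.prems have s: "i + j \<le> 2*m \<and> j \<le> 2*m - 1" by simp
      have jc: "j = 0 \<or> 2 * real j + 2 \<le> N"
      proof (cases "j = 0")
        case False
        with s have "2 * j + 2 \<le> 4 * m" by arith
        then have "real (2 * j + 2) \<le> real (4 * m)" by (simp only: of_nat_le_iff)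
        then have h1: "2 * real j + 2 \<le> 4 * real m" by simp
        moreover have "4 * real (Suc m) \<le> N + 4" using kN Suc.prems by simp
        ultimately have "2 * real j + 2 \<le> N" using h1 by simp
        then show ?thesis by simp
      qed simp
      have "(\<Sum>(i',j')\<in>SS k. \<bar>?a i j\<bar> * (\<bar>MM N i j i' j'\<bar> / N^j')) = \<bar>?a i j\<bar> * (\<Sum>(i',j')\<in>SS k. \<bar>MM N i j i' j'\<bar> / N^j')"
        by (simp add: sum_distrib_left case_prod_unfold)
      also have "\<dots> \<le> \<bar>?a i j\<bar> * (4 / N^j)"
        by (rule mult_left_mono[OF mm_bound[OF N1 jc]]) simp
      finally show ?thesis .
    qed
    then show "(case p of (i,j) \<Rightarrow> \<Sum>(i',j')\<in>SS k. \<bar>?a i j\<bar> * (\<bar>MM N i j i' j'\<bar> / N^j')) \<le>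
       (case p of (i,j) \<Rightarrow> \<bar>?a i j\<bar> * (4 / N^j))" by (simp add: p)
  qed
  also have "\<dots> = 4 * (\<Sum>(i,j)\<in>SS k. \<bar>?a i j\<bar> / N^j)"
    by (simp add: sum_distrib_left case_prod_unfold mult.commute)
  also have "\<dots> \<le> 4 * 4^m" using Suc by simp
  finally show ?case by simp
qed

theorem lemmaF3:
  fixes k :: nat
  assumes "1 \<le> k" and "real k \<le> real CARD('n::finite) / 4 + 1"
  shows "\<exists>c :: nat \<Rightarrow> nat \<Rightarrow> real.
     (\<Sum>(i,j)\<in>{(i,j). i \<le> 2*k \<and> j \<le> 2*k - 1 \<and> i + j \<le> 2*k}. \<bar>c i j\<bar>) \<le> 5 ^ k \<and>
     (\<forall>(f :: real^'n \<Rightarrow> real) (f1 :: real \<Rightarrow> real).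
        (\<forall>x. f x = f1 (norm x)) \<and>
        (\<forall>i < 2*k. \<forall>r > 0. (higher_deriv i f1 has_real_derivative higher_deriv (Suc i) f1 r) (at r)) \<and>
        continuous_on {0<..} (higher_deriv (2*k) f1)
        \<longrightarrow> (\<forall>x. x \<noteq> 0 \<longrightarrow>
              (id_minus_laplacian ^^ k) f x =
              (\<Sum>(i,j)\<in>{(i,j). i \<le> 2*k \<and> j \<le> 2*k - 1 \<and> i + j \<le> 2*k}.
                  c i j * real CARD('n) ^ j * higher_deriv i f1 (norm x) / norm x ^ j)))"
  proof -
  define N where "N = real CARD('n)"
  have N1: "N \<ge> 1" unfolding N_def by (simp add: Suc_leI)
  have Npos: "N > 0" using N1 by simp
  have kN: "real k \<le> N / 4 + 1" using assms(2) unfolding N_def .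
  have SSeq: "{(i,j). i \<le> 2*k \<and> j \<le> 2*k - 1 \<and> i + j \<le> 2*k} = SS k" by (simp add: SS_def)
  define c where "c = (\<lambda>i j. coef N k k i j / N^j)"
  show ?thesis
  proof (intro exI[of _ c] conjI allI impI)
    have "(\<Sum>(i,j)\<in>SS k. \<bar>c i j\<bar>) = (\<Sum>(i,j)\<in>SS k. \<bar>coef N k k i j\<bar> / N^j)"
      unfolding c_def using Npos by (intro sum.cong refl) (auto simp: abs_divide)
    also have "\<dots> \<le> 4^k" by (rule coef_bound[OF N1 kN]) simp
    also have "\<dots> \<le> 5^k" by (rule power_mono) auto
    finally show "(\<Sum>(i,j)\<in>{(i,j). i \<le> 2*k \<and> j \<le> 2*k - 1 \<and> i + j \<le> 2*k}. \<bar>c i j\<bar>) \<le> 5 ^ k"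
      by (simp only: SSeq)
  next
    fix f :: "real^'n \<Rightarrow> real" and f1 :: "real \<Rightarrow> real" and x :: "real^'n"
    assume H: "(\<forall>x. f x = f1 (norm x)) \<and>
        (\<forall>i < 2*k. \<forall>r > 0. (higher_deriv i f1 has_real_derivative higher_deriv (Suc i) f1 r) (at r)) \<and>
        continuous_on {0<..} (higher_deriv (2*k) f1)"
      and x: "x \<noteq> 0"
    let ?F = "\<lambda>i. higher_deriv i f1"
    have Fd: "\<forall>i<2*k. \<forall>r>0. (?F i has_real_derivative ?F (Suc i) r) (at r)" using H by blast
    have key: "m \<le> k \<Longrightarrow> \<forall>y. y \<noteq> 0 \<longrightarrow> (id_minus_laplacian ^^ m) f y = EE (coef N k m) k ?F (norm y)" for m
    proof (induction m)
      case 0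
      show ?case
      proof (intro allI impI)
        fix y :: "real^'n" assume "y \<noteq> 0"
        have "EE (coef N k 0) k ?F (norm y) = (\<Sum>(i,j)\<in>SS k. (if i = 0 \<and> j = 0 then 1 else 0) * (?F i (norm y) / norm y ^ j))"
          unfolding EE_def by simp
        also have "\<dots> = f1 (norm y)"
          by (simp only: delta_pair[OF finite_SS]) (simp add: SS_def higher_deriv_def)
        finally show "(id_minus_laplacian ^^ 0) f y = EE (coef N k 0) k ?F (norm y)" using H by simp
      qed
    next
      case (Suc m)
      have mk: "m < k" using Suc.prems by simp
      let ?a = "coef N k m"
      let ?g = "(id_minus_laplacian ^^ m) f"
      have sup: "\<And>i j. ?a i j \<noteq> 0 \<Longrightarrow> i + j \<le> 2*m \<and> j \<le> 2*m - 1"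
        using coef_support[of m k N] mk by simp
      have g: "\<forall>y. y \<noteq> 0 \<longrightarrow> ?g y = EE ?a k ?F (norm y)" using Suc by simp
      have d1: "\<forall>r>0. (EE ?a k ?F has_real_derivative (\<Sum>(i,j)\<in>SS k. ?a i j * D1 ?F i j r)) (at r)"
      proof (intro allI impI)
        fix r :: real assume r: "r > 0"
        show "(EE ?a k ?F has_real_derivative (\<Sum>(i,j)\<in>SS k. ?a i j * D1 ?F i j r)) (at r)"
          unfolding EE_def[abs_def] case_prod_unfold
        proof (rule DERIV_sum)
          fix p assume "p \<in> SS k"
          show "((\<lambda>r. ?a (fst p) (snd p) * (?F (fst p) r / r ^ snd p)) has_real_derivative
              ?a (fst p) (snd p) * D1 ?F (fst p) (snd p) r) (at r)"
          proof (cases "?a (fst p) (snd p) = 0")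
            case True then show ?thesis by simp
          next
            case False
            from sup[OF False] mk have "fst p < 2*k" by simp
            then show ?thesis by (intro DERIV_cmult term_d1[OF Fd _ r])
          qed
        qed
      qed
      have d2: "\<forall>r>0. ((\<lambda>r. \<Sum>(i,j)\<in>SS k. ?a i j * D1 ?F i j r) has_real_derivative (\<Sum>(i,j)\<in>SS k. ?a i j * D2 ?F i j r)) (at r)"
      proof (intro allI impI)
        fix r :: real assume r: "r > 0"
        show "((\<lambda>r. \<Sum>(i,j)\<in>SS k. ?a i j * D1 ?F i j r) has_real_derivative (\<Sum>(i,j)\<in>SS k. ?a i j * D2 ?F i j r)) (at r)"
          unfolding case_prod_unfold
        proof (rule DERIV_sum)
          fix p assume "p \<in> SS k"
          show "((\<lambda>r. ?a (fst p) (snd p) * D1 ?F (fst p) (snd p) r) has_real_derivative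
              ?a (fst p) (snd p) * D2 ?F (fst p) (snd p) r) (at r)"
          proof (cases "?a (fst p) (snd p) = 0")
            case True then show ?thesis by simp
          next
            case False
            from sup[OF False] mk have "Suc (fst p) < 2*k" by simp
            then show ?thesis by (intro DERIV_cmult term_d2[OF Fd _ r])
          qed
        qed
      qed
      show ?case
      proof (intro allI impI)
        fix y :: "real^'n" assume y: "y \<noteq> 0"
        have ny: "norm y > 0" using y by simp
        have "(id_minus_laplacian ^^ Suc m) f y = ?g y - laplacian ?g y"
          by (simp add: id_minus_laplacian_def)
        also have "\<dots> = EE ?a k ?F (norm y) - ((\<Sum>(i,j)\<in>SS k. ?a i j * D2 ?F i j (norm y))
            + (real CARD('n) - 1) / norm y * (\<Sum>(i,j)\<in>SS k. ?a i j * D1 ?F i j (norm y)))"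
          using laplacian_radial[OF g d1 d2 y] g y by simp
        also have "\<dots> = EE (coef N k (Suc m)) k ?F (norm y)"
          using EE_step[where a="?a" and m=m and k=k and F="?F" and N=N, OF sup mk ny] unfolding N_def by (simp add: algebra_simps)
        finally show "(id_minus_laplacian ^^ Suc m) f y = EE (coef N k (Suc m)) k ?F (norm y)" .
      qed
    qed
    have "(id_minus_laplacian ^^ k) f x = EE (coef N k k) k ?F (norm x)" using key[of k] x by simp
    also have "\<dots> = (\<Sum>(i,j)\<in>SS k. c i j * real CARD('n) ^ j * higher_deriv i f1 (norm x) / norm x ^ j)"
      unfolding EE_def c_def N_def[symmetric] using Npos by (intro sum.cong refl) auto
    finally show "(id_minus_laplacian ^^ k) f x =
              (\<Sum>(i,j)\<in>{(i,j). i \<le> 2*k \<and> j \<le> 2*k - 1 \<and> i + j \<le> 2*k}.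
                  c i j * real CARD('n) ^ j * higher_deriv i f1 (norm x) / norm x ^ j)"
      by (simp only: SSeq)
  qed
qed

end
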